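(* Let $C$ be a nonzero $[n,k]_q$-linear code. If there exists a codeword $\mathbf{c}\in C$ such that $w_1(\mathbf{c})=d_1(C)$ and $\chi_1(\mathbf{c})$ is a successive subset of $\mathbb{Z}_n$, then $d_b(C)=\min\{d_1(C)+b-1,\,n\}$ for every $1\le b\le n$.
   Context: Index set: $\mathbb{Z}_n=\{1,2,\dots,n\}$ with indices taken cyclically modulo $n$ (so $n\equiv 0$ and $n+1\equiv 1$). For $\mathbf{x}=(x_1,\dots,x_n)\in\mathbb{F}_q^n$ and $1\le b\le n$, the $b$-symbol support is $\chi_b(\mathbf{x})=\{i\in\mathbb{Z}_n : (x_i,x_{i+1},\dots,x_{i+b-1})\ne \mathbf{0}\}$ (indices mod $n$), the $b$-symbol weight is $w_b(\mathbf{x})=|\chi_b(\mathbf{x})|$ ($w_1$ is the Hamming weight), and for a linear code $C$, $d_b(C)=\min_{\mathbf{0}\ne \mathbf{c}\in C} w_b(\mathbf{c})$. For $J\subseteq\mathbb{Z}_n$, a hole of $J$ of size $h\ge1$ is a set $H=\{a+1,\dots,a+h\}\subseteq \mathbb{Z}_n\setminus J$ (indices mod $n$) with $a\in J$ and $a+h+1\in J$; $\mathbb{H}(J)$ denotes the set of all holes of $J$. $J$ is a successive subset of $\mathbb{Z}_n$ if $|\mathbb{H}(J)|\le 1$. *)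

theory Defs
  imports Main
begin

text \<open>Coordinates are indexed 0-based: the index set Z_n is {0..<n}, indices taken mod n.
  A vector of F_q^n is a function nat => 'a vanishing outside {0..<n}.\<close>

definition vec_space :: "nat \<Rightarrow> (nat \<Rightarrow> 'a::zero) set" where
  "vec_space n = {x. \<forall>i\<ge>n. x i = 0}"

definition linear_code :: "nat \<Rightarrow> (nat \<Rightarrow> 'a::field) set \<Rightarrow> bool" where
  "linear_code n C \<longleftrightarrow> C \<subseteq> vec_space n \<and> (\<lambda>i. 0) \<in> C \<and>
     (\<forall>x\<in>C. \<forall>y\<in>C. (\<lambda>i. x i + y i) \<in> C) \<and> (\<forall>a. \<forall>x\<in>C. (\<lambda>i. a * x i) \<in> C)"

definition bsupp :: "nat \<Rightarrow> nat \<Rightarrow> (nat \<Rightarrow> 'a::zero) \<Rightarrow> nat set" where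
  "bsupp n b x = {i. i < n \<and> (\<exists>j<b. x ((i + j) mod n) \<noteq> 0)}"

definition bweight :: "nat \<Rightarrow> nat \<Rightarrow> (nat \<Rightarrow> 'a::zero) \<Rightarrow> nat" where
  "bweight n b x = card (bsupp n b x)"

definition bdist :: "nat \<Rightarrow> nat \<Rightarrow> (nat \<Rightarrow> 'a::zero) set \<Rightarrow> nat" where
  "bdist n b C = Min {bweight n b c | c. c \<in> C \<and> c \<noteq> (\<lambda>i. 0)}"

definition holes :: "nat \<Rightarrow> nat set \<Rightarrow> nat set set" where
  "holes n J = {H. \<exists>a h. 1 \<le> h \<and> a \<in> J \<and>
       H = {(a + t) mod n | t. 1 \<le> t \<and> t \<le> h} \<and> H \<inter> J = {} \<and> (a + h + 1) mod n \<in> J}"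

definition successive :: "nat \<Rightarrow> nat set \<Rightarrow> bool" where
  "successive n J \<longleftrightarrow> card (holes n J) \<le> 1"

end

theory Submission
  imports Defs
begin

definition predS :: "nat \<Rightarrow> nat set \<Rightarrow> nat set" where
  "predS n S = {i. i<n \<and> (i+1) mod n \<in> S}"
definition bnd :: "nat \<Rightarrow> nat set \<Rightarrow> nat set" where
  "bnd n S = {i. i<n \<and> i \<notin> S \<and> (i+1) mod n \<in> S}"

lemma mod_shift: "((i+1) mod n + j) mod n = (i + Suc j) mod (n::nat)"
  by (simp add: mod_add_left_eq)

lemma bsupp_sub: "bsupp n b x \<subseteq> {..<n}"
  by (auto simp: bsupp_def)

lemma bsupp_mono1: "b \<ge> 1 \<Longrightarrow> bsupp n 1 x \<subseteq> bsupp n b x"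
  by (auto simp: bsupp_def intro!: exI[of _ 0])

lemma bsupp_Suc:
  assumes "b \<ge> 1" "n \<ge> 1"
  shows "bsupp n (Suc b) x = bsupp n b x \<union> predS n (bsupp n b x)"
proof
  show "bsupp n (Suc b) x \<subseteq> bsupp n b x \<union> predS n (bsupp n b x)"
  proof
    fix i assume "i \<in> bsupp n (Suc b) x"
    then obtain j where i: "i<n" "j < Suc b" "x ((i+j) mod n) \<noteq> 0" by (auto simp: bsupp_def)
    show "i \<in> bsupp n b x \<union> predS n (bsupp n b x)"
    proof (cases "j<b")
      case True thus ?thesis using i by (auto simp: bsupp_def)
    next
      case False
      hence "j = Suc (b-1)" using i assms by auto
      hence "x (((i+1) mod n + (b-1)) mod n) \<noteq> 0" using i(3) mod_shift[of i n "b-1"] by simp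
      moreover have "b - 1 < b" using assms by auto
      moreover have "(i+1) mod n < n" using assms by auto
      ultimately show ?thesis using i(1) by (auto simp: bsupp_def predS_def)
    qed
  qed
  show "bsupp n b x \<union> predS n (bsupp n b x) \<subseteq> bsupp n (Suc b) x"
  proof
    fix i assume "i \<in> bsupp n b x \<union> predS n (bsupp n b x)"
    then show "i \<in> bsupp n (Suc b) x"
    proof
      assume "i \<in> bsupp n b x" thus ?thesis by (auto simp: bsupp_def intro: less_SucI)
    next
      assume "i \<in> predS n (bsupp n b x)"
      then obtain j where ij: "i<n" "j<b" "x (((i+1) mod n + j) mod n) \<noteq> 0"
        by (auto simp: predS_def bsupp_def)
      hence "x ((i + Suc j) mod n) \<noteq> 0" using mod_shift[of i n j] by simp
      thus ?thesis using ij by (auto simp: bsupp_def)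
    qed
  qed
qed

lemma un_bnd: "S \<subseteq> {..<n} \<Longrightarrow> S \<union> predS n S = S \<union> bnd n S"
  by (auto simp: predS_def bnd_def)

lemma suc_mod: "(i::nat) < n \<Longrightarrow> (i+1) mod n = (if i+1 = n then 0 else i+1)"
  by (cases "i+1 = n") simp_all

lemma inj_suc_mod: "(x::nat) < n \<Longrightarrow> y < n \<Longrightarrow> (x+1) mod n = (y+1) mod n \<Longrightarrow> x = y"
  using suc_mod[of x n] suc_mod[of y n] by (auto split: if_splits)

lemma card_bnd_step:
  assumes "n \<ge> 1" "S \<subseteq> {..<n}"
  shows "card (bnd n (S \<union> predS n S)) \<le> card (bnd n S)"
proof (rule card_inj_on_le[where f="\<lambda>i. (i+1) mod n"])
  show "inj_on (\<lambda>i. (i+1) mod n) (bnd n (S \<union> predS n S))"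
  proof (rule inj_onI)
    fix x y assume "x \<in> bnd n (S \<union> predS n S)" "y \<in> bnd n (S \<union> predS n S)"
      "(x+1) mod n = (y+1) mod n"
    thus "x = y" using inj_suc_mod[of x n y] by (simp add: bnd_def)
  qed
  show "(\<lambda>i. (i+1) mod n) ` bnd n (S \<union> predS n S) \<subseteq> bnd n S"
    using assms by (auto simp: bnd_def predS_def)
  show "finite (bnd n S)"
    by (rule finite_subset[of _ "{..<n}"]) (auto simp: bnd_def)
qed

lemma down_closed:
  fixes m i k n :: nat
  assumes cl: "\<And>i. i < n \<Longrightarrow> (i+1) mod n \<in> S \<Longrightarrow> i \<in> S"
  shows "m \<in> S \<Longrightarrow> m < n \<Longrightarrow> m - i = k \<Longrightarrow> i \<le> m \<Longrightarrow> i \<in> S"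
proof (induction k arbitrary: i)
  case 0 thus ?case by simp
next
  case (Suc k)
  have "i+1 \<le> m" "m - (i+1) = k" using Suc.prems by linarith+
  hence "i+1 \<in> S" using Suc.IH[of "i+1"] Suc.prems by simp
  moreover have "(i+1) mod n = i+1" using Suc.prems by simp
  moreover have "i < n" using Suc.prems by linarith
  ultimately show ?case using cl[of i] by simp
qed

lemma closure_full:
  assumes "n \<ge> 1" "S \<subseteq> {..<n}" "S \<noteq> {}" "bnd n S = {}"
  shows "S = {..<n}"
proof -
  have cl: "\<And>i. i < n \<Longrightarrow> (i+1) mod n \<in> S \<Longrightarrow> i \<in> S"
    using assms(4) unfolding bnd_def by blast
  have down: "\<And>m i. m \<in> S \<Longrightarrow> m < n \<Longrightarrow> i \<le> m \<Longrightarrow> i \<in> S"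
    using down_closed[OF cl] by simp
  obtain s where s: "s \<in> S" using assms(3) by blast
  have sn: "s < n" using s assms(2) by blast
  have "0 \<in> S" by (rule down[OF s sn]) simp
  moreover have "(n - 1 + 1) mod n = 0" using assms(1) by simp
  ultimately have n1: "n - 1 \<in> S" using assms(1) cl[of "n-1"] by simp
  have "\<And>i. i < n \<Longrightarrow> i \<in> S"
  proof -
    fix i assume "i < n"
    thus "i \<in> S" using assms(1) down[OF n1, of i] by simp
  qed
  thus ?thesis using assms(2) by auto
qed

lemma lower_bound:
  assumes "n \<ge> 1" "bsupp n 1 x \<noteq> {}" "1 \<le> b"
  shows "card (bsupp n b x) \<ge> min (card (bsupp n 1 x) + b - 1) n"
  using assms(3)
proof (induction b rule: dec_induct)
  case base thus ?case by simp
next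
  case (step b)
  let ?S = "bsupp n b x"
  have fin: "finite ?S" by (rule finite_subset[OF bsupp_sub]) simp
  have ne: "?S \<noteq> {}" using bsupp_mono1[OF step(1)] assms(2) by blast
  have T: "bsupp n (Suc b) x = ?S \<union> bnd n ?S"
    using bsupp_Suc[OF step(1) assms(1), of x] un_bnd[OF bsupp_sub[of n b x]] by simp
  have finb: "finite (bnd n ?S)" by (rule finite_subset[of _ "{..<n}"]) (auto simp: bnd_def)
  show ?case
  proof (cases "?S = {..<n}")
    case True
    hence "bsupp n (Suc b) x = {..<n}" using T bsupp_sub[of n "Suc b" x] by auto
    thus ?thesis by simp
  next
    case False
    hence "bnd n ?S \<noteq> {}" using closure_full[OF assms(1) bsupp_sub ne] by blast
    hence "card (bnd n ?S) \<ge> 1" using finb by (simp add: Suc_leI card_gt_0_iff)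
    moreover have "card (bsupp n (Suc b) x) = card ?S + card (bnd n ?S)"
      unfolding T by (rule card_Un_disjoint) (use fin finb in \<open>auto simp: bnd_def\<close>)
    ultimately show ?thesis using step(3) by linarith
  qed
qed

lemma upper_bound:
  assumes "n \<ge> 1" "card (bnd n (bsupp n 1 x)) \<le> 1" "1 \<le> b"
  shows "card (bsupp n b x) \<le> card (bsupp n 1 x) + b - 1 \<and> card (bnd n (bsupp n b x)) \<le> 1"
  using assms(3)
proof (induction b rule: dec_induct)
  case base thus ?case using assms by simp
next
  case (step b)
  let ?S = "bsupp n b x"
  have fin: "finite ?S" by (rule finite_subset[OF bsupp_sub]) simp
  have T: "bsupp n (Suc b) x = ?S \<union> bnd n ?S"
    using bsupp_Suc[OF step(1) assms(1), of x] un_bnd[OF bsupp_sub[of n b x]] by simp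
  have "card (bsupp n (Suc b) x) \<le> card ?S + card (bnd n ?S)"
    unfolding T by (rule card_Un_le)
  moreover have "card (bnd n (bsupp n (Suc b) x)) \<le> card (bnd n ?S)"
    using card_bnd_step[OF assms(1) bsupp_sub[of n b x]] bsupp_Suc[OF step(1) assms(1), of x] by simp
  ultimately show ?case using step(3) step(1) by linarith
qed

lemma hole_exists:
  assumes "n \<ge> 1" "J \<subseteq> {..<n}" "i \<in> bnd n J"
  shows "\<exists>H. H \<in> holes n J \<and> i \<in> H \<and> (\<forall>i'\<in>bnd n J. i' \<in> H \<longrightarrow> i' = i)"
proof -
  from assms(3) have i: "i<n" "i \<notin> J" "(i+1) mod n \<in> J" by (auto simp: bnd_def)
  have n2: "n \<ge> 2"
  proof (rule ccontr)
    assume "\<not> n \<ge> 2"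
    hence "n = 1" using assms(1) by simp
    thus False using i by simp
  qed
  define K where "K = {k. 1 \<le> k \<and> k \<le> n \<and> (i + n - k) mod n \<in> J}"
  have "i + n - (n - 1) = i + 1" using n2 by simp
  hence n1K: "n - 1 \<in> K" using n2 i(3) by (simp add: K_def)
  define m where "m = Least (\<lambda>k. k \<in> K)"
  have mK: "m \<in> K" unfolding m_def by (rule LeastI[of "\<lambda>k. k\<in>K", OF n1K])
  have mmin: "\<And>k. k < m \<Longrightarrow> k \<notin> K" unfolding m_def by (rule not_less_Least)
  from mK have m: "1 \<le> m" "m \<le> n" "(i+n-m) mod n \<in> J" by (auto simp: K_def)
  define a where "a = (i+n-m) mod n"
  have key: "(a+t) mod n = (i + n - (m - t)) mod n" if "t \<le> m" for t
  proof -
    have eq: "(i+n-m) + t = i + n - (m-t)" using m(2) that by simp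
    have "(a+t) mod n = ((i+n-m) + t) mod n" by (simp add: a_def mod_add_left_eq)
    also have "\<dots> = (i + n - (m - t)) mod n" using eq by simp
    finally show ?thesis .
  qed
  have am: "(a+m) mod n = i" using key[of m] i(1) by simp
  have notJ: "(a+t) mod n \<notin> J" if "1 \<le> t" "t \<le> m" for t
  proof (cases "m - t = 0")
    case True
    thus ?thesis using key[OF that(2)] i by simp
  next
    case False
    hence "m - t \<notin> K" using mmin[of "m-t"] that by simp
    moreover have "1 \<le> m - t" "m - t \<le> n" using False m(2) by simp_all
    ultimately show ?thesis using key[OF that(2)] by (simp add: K_def)
  qed
  define H where "H = {(a + t) mod n | t. 1 \<le> t \<and> t \<le> m}"
  have aJ: "a \<in> J" using m(3) a_def by simp
  have HJ: "H \<inter> J = {}" using notJ by (auto simp: H_def)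
  have "(a+m+1) mod n = ((a+m) mod n + 1) mod n" by (simp add: mod_Suc_eq)
  hence last: "(a+m+1) mod n \<in> J" using am i(3) by simp
  have Hh: "H \<in> holes n J"
    unfolding holes_def using m(1) aJ HJ last H_def by blast
  have iH: "i \<in> H" unfolding H_def using am m(1) by (auto intro!: exI[of _ m])
  have uniq: "i' = i" if "i' \<in> bnd n J" "i' \<in> H" for i'
  proof -
    from that(2) obtain t where t: "1 \<le> t" "t \<le> m" "i' = (a+t) mod n" by (auto simp: H_def)
    show ?thesis
    proof (cases "t < m")
      case True
      have "(i'+1) mod n = (a + (t+1)) mod n" using t(3) by (simp add: mod_Suc_eq)
      moreover have "(a + (t+1)) mod n \<notin> J" using notJ[of "t+1"] True by simp
      moreover have "(i'+1) mod n \<in> J" using that(1) by (simp add: bnd_def)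
      ultimately show ?thesis by simp
    next
      case False
      hence "t = m" using t(2) by simp
      thus ?thesis using t(3) am by simp
    qed
  qed
  show ?thesis using Hh iH uniq by blast
qed

lemma bnd_card:
  assumes "n \<ge> 1" "J \<subseteq> {..<n}" "successive n J"
  shows "card (bnd n J) \<le> 1"
proof -
  have "\<forall>i\<in>bnd n J. \<exists>H. H \<in> holes n J \<and> i \<in> H \<and> (\<forall>i'\<in>bnd n J. i' \<in> H \<longrightarrow> i' = i)"
    using hole_exists[OF assms(1,2)] by blast
  then obtain f where f: "\<forall>i\<in>bnd n J. f i \<in> holes n J \<and> i \<in> f i \<and> (\<forall>i'\<in>bnd n J. i' \<in> f i \<longrightarrow> i' = i)"
    by (rule bchoice[THEN exE]) blast
  have inj: "inj_on f (bnd n J)"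
  proof (rule inj_onI)
    fix x y assume xy: "x \<in> bnd n J" "y \<in> bnd n J" "f x = f y"
    hence "y \<in> f x" using f by simp
    thus "x = y" using f xy by blast
  qed
  have "holes n J \<subseteq> Pow {..<n}" using assms(1) by (auto simp: holes_def)
  hence fin: "finite (holes n J)" by (rule finite_subset) simp
  have "card (bnd n J) \<le> card (holes n J)"
    by (rule card_inj_on_le[OF inj _ fin]) (use f in blast)
  thus ?thesis using assms(3) by (simp add: successive_def)
qed

theorem mainTheorem1:
  fixes C :: "(nat \<Rightarrow> 'a::{finite,field}) set" and n :: nat
  assumes "n \<ge> 1"
    and "linear_code n C"
    and "\<exists>c\<in>C. c \<noteq> (\<lambda>i. 0)"
    and "\<exists>c\<in>C. bweight n 1 c = bdist n 1 C \<and> successive n (bsupp n 1 c)"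
  shows "\<forall>b. 1 \<le> b \<and> b \<le> n \<longrightarrow> bdist n b C = min (bdist n 1 C + b - 1) n"
proof -
  have Cv: "C \<subseteq> vec_space n" using assms(2) by (simp add: linear_code_def)
  have ne1: "bsupp n 1 c \<noteq> {}" if cC: "c \<in> C" and cnz: "c \<noteq> (\<lambda>i. 0)" for c :: "nat \<Rightarrow> 'a"
  proof -
    obtain i where ci: "c i \<noteq> 0" using cnz by fastforce
    have "c \<in> vec_space n" using Cv cC by blast
    hence "\<forall>j\<ge>n. c j = 0" by (simp add: vec_space_def)
    hence "i < n" using ci not_less by blast
    thus ?thesis using ci by (auto simp: bsupp_def)
  qed
  have wle: "bweight n b c \<le> n" for b and c :: "nat \<Rightarrow> 'a"
    unfolding bweight_def using card_mono[OF _ bsupp_sub[of n b c]] by simp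
  define W where "W b = {bweight n b c | c. c \<in> C \<and> c \<noteq> (\<lambda>i. 0)}" for b
  have finW: "finite (W b)" for b
    by (rule finite_subset[of _ "{..n}"]) (auto simp: W_def wle)
  have neW: "W b \<noteq> {}" for b using assms(3) by (auto simp: W_def)
  have bd: "bdist n b C = Min (W b)" for b by (simp add: bdist_def W_def)
  define d where "d = bdist n 1 C"
  have dle: "d \<le> bweight n 1 c" if "c \<in> C" "c \<noteq> (\<lambda>i. 0)" for c
    unfolding d_def bd using that by (intro Min_le[OF finW]) (auto simp: W_def)
  obtain c0 where c0: "c0 \<in> C" "bweight n 1 c0 = d" "successive n (bsupp n 1 c0)"
    using assms(4) d_def by blast
  have c0nz: "c0 \<noteq> (\<lambda>i. 0)"
  proof
    assume z: "c0 = (\<lambda>i. 0)"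
    have "d \<in> W 1" unfolding d_def bd by (rule Min_in[OF finW neW])
    then obtain c where c: "c \<in> C" "c \<noteq> (\<lambda>i. 0)" "d = bweight n 1 c" by (auto simp: W_def)
    have "finite (bsupp n 1 c)" by (rule finite_subset[OF bsupp_sub]) simp
    hence "d > 0" using ne1[OF c(1,2)] c(3) by (simp add: bweight_def card_gt_0_iff)
    moreover have "bweight n 1 c0 = 0" using z by (simp add: bweight_def bsupp_def)
    ultimately show False using c0(2) by simp
  qed
  have bnd0: "card (bnd n (bsupp n 1 c0)) \<le> 1"
    by (rule bnd_card[OF assms(1) bsupp_sub c0(3)])
  show ?thesis
  proof (intro allI impI)
    fix b assume b: "1 \<le> b \<and> b \<le> n"
    have "bweight n b c0 \<le> d + b - 1"
      using upper_bound[OF assms(1) bnd0, of b] b c0(2) by (simp add: bweight_def)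
    hence up: "bweight n b c0 \<le> min (d + b - 1) n" using wle by simp
    have "Min (W b) \<le> bweight n b c0"
      using c0 c0nz by (intro Min_le[OF finW]) (auto simp: W_def)
    moreover have "min (d + b - 1) n \<le> Min (W b)"
    proof (rule Min.boundedI[OF finW neW])
      fix w assume "w \<in> W b"
      then obtain c where c: "c \<in> C" "c \<noteq> (\<lambda>i. 0)" "w = bweight n b c" by (auto simp: W_def)
      have "card (bsupp n b c) \<ge> min (card (bsupp n 1 c) + b - 1) n"
        using lower_bound[OF assms(1) ne1[OF c(1,2)]] b by simp
      moreover have "card (bsupp n 1 c) \<ge> d" using dle[OF c(1,2)] by (simp add: bweight_def)
      ultimately show "min (d + b - 1) n \<le> w" using c(3) b by (simp add: bweight_def)
    qed
    ultimately show "bdist n b C = min (bdist n 1 C + b - 1) n"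
      using up bd[of b] d_def by (simp only: min_def split: if_splits)
  qed
qed

end
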